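(* Let $N\ge1$, $T>0$, and let $\alpha\in\mathcal U$ be an optimal control for the problem of minimizing $\int_0^T\mathbb V(t)\,dt$, $\mathbb V=\frac1N\sum_i\xi_i^2$, where $\dot\xi_i=-\xi_i+(1-\alpha_i)\bar\xi$, $\bar\xi=\frac1N\sum_j\xi_j$, with initial datum satisfying $\bar\xi(0)>0$ and $\xi_1(0)\ge\dots\ge\xi_N(0)$. Suppose there exist $\tau\in[0,T]$ and $i,j\in\{1,\dots,N\}$ with $\xi_i(\tau)=\xi_j(\tau)$. Then $\xi_i(t)=\xi_j(t)$ for all $t\in[\tau,T]$, and consequently $\alpha_i(t)=\alpha_j(t)$ for almost every $t\in[\tau,T]$.
   Context: $\mathcal U$ is the set of measurable $\alpha:[0,T]\to[0,1]^N$ with $\sum_i\alpha_i(t)\le1$ for all $t$. *)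

theory Defs
  imports "HOL-Analysis.Analysis"
begin

text \<open>States and controls are functions of time returning a vector indexed by
  \<open>{1..N}\<close> (values outside \<open>{1..N}\<close> are irrelevant).\<close>

definition admissible :: "nat \<Rightarrow> real \<Rightarrow> (real \<Rightarrow> nat \<Rightarrow> real) \<Rightarrow> bool" where
  "admissible N T \<beta> \<longleftrightarrow>
     (\<forall>i\<in>{1..N}. (\<lambda>t. \<beta> t i) \<in> borel_measurable (restrict_space lborel {0..T})) \<and>
     (\<forall>t\<in>{0..T}. (\<forall>i\<in>{1..N}. 0 \<le> \<beta> t i \<and> \<beta> t i \<le> 1) \<and> (\<Sum>i=1..N. \<beta> t i) \<le> 1)"

definition mean :: "nat \<Rightarrow> (nat \<Rightarrow> real) \<Rightarrow> real" where
  "mean N v = (1 / real N) * (\<Sum>j=1..N. v j)"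

definition Vfun :: "nat \<Rightarrow> (nat \<Rightarrow> real) \<Rightarrow> real" where
  "Vfun N v = (1 / real N) * (\<Sum>i=1..N. (v i)\<^sup>2)"

text \<open>Carath\'eodory solution of \<open>\<xi>_i' = -\<xi>_i + (1-\<beta>_i) mean \<xi>\<close> on [0,T]
  with initial datum \<open>\<xi>0\<close>, in integral form.\<close>
definition trajectory ::
  "nat \<Rightarrow> real \<Rightarrow> (real \<Rightarrow> nat \<Rightarrow> real) \<Rightarrow> (nat \<Rightarrow> real) \<Rightarrow> (real \<Rightarrow> nat \<Rightarrow> real) \<Rightarrow> bool" where
  "trajectory N T \<beta> \<xi>0 x \<longleftrightarrow>
     (\<forall>i\<in>{1..N}. continuous_on {0..T} (\<lambda>t. x t i)) \<and>
     (\<forall>i\<in>{1..N}. \<forall>t\<in>{0..T}.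
        x t i = \<xi>0 i + (LBINT s:{0..t}. (- x s i + (1 - \<beta> s i) * mean N (x s))))"

definition cost :: "nat \<Rightarrow> real \<Rightarrow> (real \<Rightarrow> nat \<Rightarrow> real) \<Rightarrow> real" where
  "cost N T x = (LBINT t:{0..T}. Vfun N (x t))"

definition optimal_control ::
  "nat \<Rightarrow> real \<Rightarrow> (nat \<Rightarrow> real) \<Rightarrow> (real \<Rightarrow> nat \<Rightarrow> real) \<Rightarrow> (real \<Rightarrow> nat \<Rightarrow> real) \<Rightarrow> bool" where
  "optimal_control N T \<xi>0 \<alpha> x \<longleftrightarrow>
     admissible N T \<alpha> \<and> trajectory N T \<alpha> \<xi>0 x \<and>
     (\<forall>\<beta> y. admissible N T \<beta> \<and> trajectory N T \<beta> \<xi>0 y \<longrightarrow> cost N T x \<le> cost N T y)"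

end

theory Submission
  imports Defs
begin

lemma sum_two_change:
  fixes f g :: "nat \<Rightarrow> real"
  assumes "finite A" "i \<in> A" "j \<in> A" "i \<noteq> j"
    and "\<forall>k\<in>A. k \<noteq> i \<longrightarrow> k \<noteq> j \<longrightarrow> f k = g k"
    and "f i + f j = g i + g j + d"
  shows "sum f A = sum g A + d"
proof -
  have 1: "sum f A = f i + sum f (A - {i})" using assms by (intro sum.remove) auto
  have 2: "sum f (A - {i}) = f j + sum f (A - {i} - {j})" using assms by (intro sum.remove) auto
  have 3: "sum g A = g i + sum g (A - {i})" using assms by (intro sum.remove) auto
  have 4: "sum g (A - {i}) = g j + sum g (A - {i} - {j})" using assms by (intro sum.remove) auto
  have 5: "sum f (A - {i} - {j}) = sum g (A - {i} - {j})" using assms by (intro sum.cong) auto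
  from 1 2 3 4 5 show ?thesis using assms(6) by linarith
qed

lemma cont_bdd:
  fixes f :: "real \<Rightarrow> real"
  assumes "continuous_on {a..b} f"
  obtains B where "\<forall>t\<in>{a..b}. \<bar>f t\<bar> \<le> B"
proof -
  have "bounded (f ` {a..b})"
    by (intro compact_imp_bounded compact_continuous_image assms compact_Icc)
  then show ?thesis using that by (auto simp: bounded_real)
qed

lemma cont_meas:
  fixes f :: "real \<Rightarrow> real"
  assumes "continuous_on {a..b} f"
  shows "f \<in> borel_measurable (restrict_space lborel {a..b})"
proof -
  have "f \<in> borel_measurable (restrict_space borel {a..b})"
    by (rule borel_measurable_continuous_on_restrict[OF assms])
  then show ?thesis
    by (subst measurable_cong_sets[OF sets_restrict_space_cong[OF sets_lborel] refl])
qed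

lemma si_bdd:
  fixes f :: "real \<Rightarrow> real"
  assumes "f \<in> borel_measurable (restrict_space lborel {a..b})" "\<forall>t\<in>{a..b}. \<bar>f t\<bar> \<le> B"
  shows "set_integrable lborel {a..b} f"
  unfolding set_integrable_def
proof (rule integrableI_bounded_set[where A="{a..b}" and B=B])
  show "(\<lambda>x. indicat_real {a..b} x *\<^sub>R f x) \<in> borel_measurable lborel"
    using assms(1) by (subst (asm) borel_measurable_restrict_space_iff) auto
  show "AE x in lborel. x \<in> {a..b} \<longrightarrow> norm (indicat_real {a..b} x *\<^sub>R f x) \<le> B"
    using assms(2) by (intro AE_I2) auto
  show "AE x in lborel. x \<notin> {a..b} \<longrightarrow> indicat_real {a..b} x *\<^sub>R f x = 0"
    by (intro AE_I2) auto
qed (auto simp: emeasure_lborel_Icc_eq)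

lemma si_sub:
  fixes f :: "real \<Rightarrow> real"
  assumes "set_integrable lborel {a..b} f" "a \<le> c" "d \<le> b"
  shows "set_integrable lborel {c..d} f" "f integrable_on {c..d}"
    "(LINT x:{c..d}|lborel. f x) = integral {c..d} f"
proof -
  show 1: "set_integrable lborel {c..d} f"
    by (rule set_integrable_subset[OF assms(1)]) (use assms in auto)
  show "f integrable_on {c..d}" "(LINT x:{c..d}|lborel. f x) = integral {c..d} f"
    using set_borel_integral_eq_integral[OF 1] by auto
qed

definition rhs :: "nat \<Rightarrow> (real \<Rightarrow> nat \<Rightarrow> real) \<Rightarrow> (real \<Rightarrow> nat \<Rightarrow> real) \<Rightarrow> nat \<Rightarrow> real \<Rightarrow> real" where
  "rhs N \<beta> y k s = - y s k + (1 - \<beta> s k) * mean N (y s)"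

lemma mean_cont:
  assumes "\<forall>k\<in>{1..N}. continuous_on S (\<lambda>t. y t k)"
  shows "continuous_on S (\<lambda>t. mean N (y t))"
  unfolding mean_def using assms
  by (intro continuous_on_mult continuous_on_const continuous_on_sum) auto

lemma rhs_si:
  assumes adm: "admissible N T \<beta>" and cont: "\<forall>k\<in>{1..N}. continuous_on {0..T} (\<lambda>t. y t k)"
    and k: "k \<in> {1..N}"
  shows "set_integrable lborel {0..T} (rhs N \<beta> y k)"
proof -
  have c1: "continuous_on {0..T} (\<lambda>t. y t k)" using cont k by auto
  have c2: "continuous_on {0..T} (\<lambda>t. mean N (y t))" using mean_cont[OF cont] .
  obtain B1 where B1: "\<forall>t\<in>{0..T}. \<bar>y t k\<bar> \<le> B1" using cont_bdd[OF c1] by blast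
  obtain B2 where B2: "\<forall>t\<in>{0..T}. \<bar>mean N (y t)\<bar> \<le> B2" using cont_bdd[OF c2] by blast
  note [measurable] = cont_meas[OF c1] cont_meas[OF c2]
  have [measurable]: "(\<lambda>t. \<beta> t k) \<in> borel_measurable (restrict_space lborel {0..T})"
    using adm k unfolding admissible_def by auto
  have m: "rhs N \<beta> y k \<in> borel_measurable (restrict_space lborel {0..T})"
    unfolding rhs_def[abs_def] by measurable
  have "\<forall>t\<in>{0..T}. \<bar>rhs N \<beta> y k t\<bar> \<le> B1 + B2"
  proof
    fix t assume t: "t \<in> {0..T}"
    have b: "0 \<le> \<beta> t k" "\<beta> t k \<le> 1" using adm k t unfolding admissible_def by auto
    have "\<bar>(1 - \<beta> t k) * mean N (y t)\<bar> \<le> 1 * B2"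
      unfolding abs_mult using b B2 t by (intro mult_mono) auto
    moreover have "\<bar>y t k\<bar> \<le> B1" using B1 t by auto
    ultimately show "\<bar>rhs N \<beta> y k t\<bar> \<le> B1 + B2" unfolding rhs_def by linarith
  qed
  then show ?thesis using si_bdd[OF m] by blast
qed

lemma traj_HK:
  assumes adm: "admissible N T \<beta>" and tr: "trajectory N T \<beta> \<xi>0 y"
    and k: "k \<in> {1..N}" and t: "t \<in> {0..T}"
  shows "y t k = \<xi>0 k + integral {0..t} (rhs N \<beta> y k)"
    "rhs N \<beta> y k integrable_on {0..t}"
proof -
  have cont: "\<forall>k\<in>{1..N}. continuous_on {0..T} (\<lambda>t. y t k)" using tr unfolding trajectory_def by auto
  have si: "set_integrable lborel {0..T} (rhs N \<beta> y k)" by (rule rhs_si[OF adm cont k])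
  have "y t k = \<xi>0 k + (LBINT s:{0..t}. rhs N \<beta> y k s)"
    using tr k t unfolding trajectory_def rhs_def by auto
  then show "y t k = \<xi>0 k + integral {0..t} (rhs N \<beta> y k)"
    using si_sub(3)[OF si, of 0 t] t by simp
  show "rhs N \<beta> y k integrable_on {0..t}"
    using si_sub(2)[OF si, of 0 t] t by simp
qed

lemma traj_intro:
  assumes adm: "admissible N T \<beta>" and cont: "\<forall>k\<in>{1..N}. continuous_on {0..T} (\<lambda>t. y t k)"
    and eq: "\<forall>k\<in>{1..N}. \<forall>t\<in>{0..T}. y t k = \<xi>0 k + integral {0..t} (rhs N \<beta> y k)"
  shows "trajectory N T \<beta> \<xi>0 y"
  unfolding trajectory_def
proof (intro conjI ballI)
  fix k t assume k: "k \<in> {1..N}" and t: "t \<in> {0..T}"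
  have si: "set_integrable lborel {0..T} (rhs N \<beta> y k)" by (rule rhs_si[OF adm cont k])
  have "(LBINT s:{0..t}. rhs N \<beta> y k s) = integral {0..t} (rhs N \<beta> y k)"
    using si_sub(3)[OF si, of 0 t] t by simp
  then show "y t k = \<xi>0 k + (LBINT s:{0..t}. - y s k + (1 - \<beta> s k) * mean N (y s))"
    using eq k t unfolding rhs_def by simp
qed (use cont in auto)

lemma sum_rhs:
  assumes N: "N \<ge> 1"
  shows "(\<Sum>k=1..N. rhs N \<beta> y k s) = - (\<Sum>k=1..N. \<beta> s k) * mean N (y s)"
proof -
  have Nm: "(\<Sum>k=1..N. y s k) = real N * mean N (y s)" using N unfolding mean_def by simp
  have "(\<Sum>k=1..N. rhs N \<beta> y k s) = - (\<Sum>k=1..N. y s k) + (\<Sum>k=1..N. (1 - \<beta> s k)) * mean N (y s)"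
      proof -
    have "(\<Sum>k=1..N. rhs N \<beta> y k s) = (\<Sum>k=1..N. - y s k) + (\<Sum>k=1..N. (1 - \<beta> s k) * mean N (y s))"
      unfolding rhs_def by (rule sum.distrib)
    moreover have "(\<Sum>k=1..N. (1 - \<beta> s k) * mean N (y s)) = (\<Sum>k=1..N. (1 - \<beta> s k)) * mean N (y s)"
      by (rule sum_distrib_right[symmetric])
    ultimately show ?thesis by (simp add: sum_negf)
  qed
  also have "(\<Sum>k=1..N. (1 - \<beta> s k)) = real N - (\<Sum>k=1..N. \<beta> s k)"
    by (simp add: sum_subtractf)
  finally show ?thesis using Nm by (simp add: algebra_simps)
qed

lemma mean_eq:
  assumes N: "N \<ge> 1" and adm: "admissible N T \<beta>" and tr: "trajectory N T \<beta> \<xi>0 y"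
    and t: "t \<in> {0..T}"
  shows "mean N (y t) = mean N \<xi>0 + integral {0..t} (\<lambda>s. (1 / real N) * (\<Sum>k=1..N. rhs N \<beta> y k s))"
    "(\<lambda>s. (1 / real N) * (\<Sum>k=1..N. rhs N \<beta> y k s)) integrable_on {0..t}"
proof -
  have int: "\<And>k. k \<in> {1..N} \<Longrightarrow> rhs N \<beta> y k integrable_on {0..t}"
    using traj_HK(2)[OF adm tr _ t] by blast
  have "(\<Sum>k=1..N. y t k) = (\<Sum>k=1..N. \<xi>0 k + integral {0..t} (rhs N \<beta> y k))"
    using traj_HK(1)[OF adm tr _ t] by (intro sum.cong) auto
  also have "\<dots> = (\<Sum>k=1..N. \<xi>0 k) + integral {0..t} (\<lambda>s. \<Sum>k=1..N. rhs N \<beta> y k s)"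
  proof -
    have "integral {0..t} (\<lambda>s. \<Sum>k=1..N. rhs N \<beta> y k s) = (\<Sum>k=1..N. integral {0..t} (rhs N \<beta> y k))"
      by (rule integral_sum) (auto intro: int)
    then show ?thesis by (simp add: sum.distrib)
  qed
  finally have "mean N (y t) = (1 / real N) * ((\<Sum>k=1..N. \<xi>0 k) + integral {0..t} (\<lambda>s. \<Sum>k=1..N. rhs N \<beta> y k s))"
    unfolding mean_def by simp
  also have "\<dots> = mean N \<xi>0 + integral {0..t} (\<lambda>s. (1 / real N) * (\<Sum>k=1..N. rhs N \<beta> y k s))"
    unfolding mean_def by (simp add: algebra_simps)
  finally show "mean N (y t) = mean N \<xi>0 + integral {0..t} (\<lambda>s. (1 / real N) * (\<Sum>k=1..N. rhs N \<beta> y k s))" .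
  show "(\<lambda>s. (1 / real N) * (\<Sum>k=1..N. rhs N \<beta> y k s)) integrable_on {0..t}"
  proof -
    have "(\<lambda>s. \<Sum>k=1..N. rhs N \<beta> y k s) integrable_on {0..t}" by (rule integrable_sum) (auto intro: int)
    from integrable_cmul[OF this, of "1 / real N"] show ?thesis by simp
  qed
qed

lemma mean_pos:
  assumes N: "N \<ge> 1" and adm: "admissible N T \<beta>" and tr: "trajectory N T \<beta> \<xi>0 y"
    and m0: "mean N \<xi>0 > 0" and t: "t \<in> {0..T}"
  shows "mean N (y t) > 0"
proof (rule ccontr)
  define m where "m s = mean N (y s)" for s
  define G where "G s = (1 / real N) * (\<Sum>k=1..N. rhs N \<beta> y k s)" for s
  have eqm: "\<And>t. t \<in> {0..T} \<Longrightarrow> m t = mean N \<xi>0 + integral {0..t} G"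
    using mean_eq(1)[OF N adm tr] unfolding m_def G_def[abs_def] by blast
  have intG: "\<And>t. t \<in> {0..T} \<Longrightarrow> G integrable_on {0..t}"
    using mean_eq(2)[OF N adm tr] unfolding G_def[abs_def] by blast
  have cont: "continuous_on {0..T} m"
    unfolding m_def using tr unfolding trajectory_def by (intro mean_cont) auto
  have Gb: "G s \<ge> - max 0 (m s)" if s: "s \<in> {0..T}" for s
  proof -
    have c1: "G s = - ((\<Sum>k=1..N. \<beta> s k) / real N) * m s"
      unfolding G_def m_def using sum_rhs[OF N] by simp
    have c2: "0 \<le> (\<Sum>k=1..N. \<beta> s k)" "(\<Sum>k=1..N. \<beta> s k) \<le> 1"
      using adm s unfolding admissible_def by (auto intro: sum_nonneg)
    have c3: "real N \<ge> 1" using N by simp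
    define a where "a = (\<Sum>k=1..N. \<beta> s k) / real N"
    have "0 \<le> a" "a \<le> 1" using c2 c3 unfolding a_def by (auto simp: field_simps)
    then have "a * m s \<le> max 0 (m s)"
      by (cases "m s \<ge> 0") (auto simp: mult_le_cancel_right1 mult_nonneg_nonpos intro: mult_left_le_one_le)
    then show ?thesis using c1 unfolding a_def by simp
  qed
  assume "\<not> mean N (y t) > 0"
  then have tZ: "t \<in> {s \<in> {0..T}. m s \<le> 0}" using t unfolding m_def by auto
  define Z where "Z = {s \<in> {0..T}. m s \<le> 0}"
  have "closed Z"
  proof -
    have "closed ({0..T} \<inter> m -` {..0})"
      by (rule continuous_closed_preimage[OF cont closed_atLeastAtMost closed_atMost])
    moreover have "Z = {0..T} \<inter> m -` {..0}" unfolding Z_def by auto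
    ultimately show ?thesis by simp
  qed
  moreover have "Z \<noteq> {}" using tZ unfolding Z_def by auto
  moreover have bdd: "bdd_below Z" unfolding Z_def by (rule bdd_belowI[of _ 0]) auto
  ultimately have t1Z: "Inf Z \<in> Z" by (intro closed_contains_Inf)
  define t1 where "t1 = Inf Z"
  have t1: "t1 \<in> {0..T}" "m t1 \<le> 0" using t1Z unfolding t1_def Z_def by auto
  have before: "m s > 0" if "s \<in> {0..T}" "s < t1" for s
  proof (rule ccontr)
    assume "\<not> m s > 0"
    then have "s \<in> Z" using that unfolding Z_def by auto
    then have "t1 \<le> s" unfolding t1_def using bdd by (simp add: cInf_lower)
    then show False using that by simp
  qed
  have m0': "m 0 = mean N \<xi>0" using eqm[of 0] \<open>t1 \<in> {0..T}\<close> by simp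
  have "t1 \<noteq> 0" using m0 m0' t1 by auto
  then have t1pos: "t1 > 0" using t1 by simp
  define s0 where "s0 = max 0 (t1 - 1/2)"
  have s0: "s0 < t1" "0 \<le> s0" "t1 - s0 \<le> 1/2" unfolding s0_def using t1pos by (auto simp: max_def)
  have ms0: "m s0 > 0" using before[of s0] s0 t1 by auto
  have "continuous_on {s0..t1} m" using cont by (rule continuous_on_subset) (use s0 t1 in auto)
  then obtain t2 where t2: "t2 \<in> {s0..t1}" "\<And>u. u \<in> {s0..t1} \<Longrightarrow> m u \<le> m t2"
    using continuous_attains_sup[of "{s0..t1}" m] s0 by fastforce
  have mt2: "m t2 \<ge> m s0" using t2(2)[of s0] s0 by auto
  have mt2pos: "0 \<le> m t2" using mt2 ms0 by linarith
  have "t2 \<noteq> t1" using mt2 ms0 t1 by auto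
  then have t2lt: "t2 < t1" using t2 by auto
  have comb: "integral {0..t2} G + integral {t2..t1} G = integral {0..t1} G"
    by (rule Henstock_Kurzweil_Integration.integral_combine) (use t2 s0 t2lt intG t1 in auto)
  have "m t1 - m t2 = integral {t2..t1} G"
    using eqm[of t1] eqm[of t2] comb t1 t2 s0 by auto
  moreover have "integral {t2..t1} (\<lambda>_. - m t2) \<le> integral {t2..t1} G"
  proof (rule integral_le)
    show "G integrable_on {t2..t1}"
      by (rule integrable_subinterval_real[OF intG[OF t1(1)]]) (use t2 s0 in auto)
    fix u assume u: "u \<in> {t2..t1}"
    have "m u \<le> m t2" using t2 u by auto
    moreover have "0 \<le> m t2" using mt2 ms0 by linarith
    ultimately have mx: "max 0 (m u) \<le> m t2" by simp
    have "- max 0 (m u) \<le> G u" using Gb[of u] u t2 s0 t1 by auto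
    with mx show "- m t2 \<le> G u" by linarith
  qed auto
  moreover have "integral {t2..t1} (\<lambda>_. - m t2) = - (t1 - t2) * m t2"
    using t2lt by (simp add: algebra_simps)
  moreover have "(t1 - t2) * m t2 \<le> (1/2) * m t2"
    using t2 s0 mt2pos by (intro mult_right_mono) auto
  ultimately have "m t1 \<ge> m t2 / 2" by linarith
  then show False using t1 mt2 ms0 by linarith
qed

lemma int_step:
  fixes H :: "real \<Rightarrow> real"
  assumes H: "H integrable_on {0..T}" and tau: "\<tau> \<in> {0..T}" and t: "t \<in> {0..T}"
  shows "(\<lambda>s. (if \<tau> \<le> s then 1 else 0) * H s) integrable_on {0..t}"
    "integral {0..t} (\<lambda>s. (if \<tau> \<le> s then 1 else 0) * H s) =
       (if \<tau> \<le> t then integral {0..t} H - integral {0..\<tau>} H else 0)"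
proof -
  define C where "C s = (if \<tau> \<le> s then 1 else 0) * H s" for s
  have "C integrable_on {0..t} \<and> integral {0..t} C = (if \<tau> \<le> t then integral {0..t} H - integral {0..\<tau>} H else 0)"
  proof (cases "\<tau> \<le> t")
    case False
    have z: "\<And>s. s \<in> {0..t} \<Longrightarrow> C s = 0" using False unfolding C_def by auto
    have "C integrable_on {0..t}" by (rule integrable_eq[OF integrable_0]) (use z in auto)
    moreover have "integral {0..t} C = 0" using integral_cong[of "{0..t}" C "\<lambda>_. 0"] z by simp
    ultimately show ?thesis using False by simp
  next
    case True
    have Ht: "H integrable_on {\<tau>..t}" by (rule integrable_subinterval_real[OF H]) (use tau t in auto)
    have Ht0: "H integrable_on {0..t}" by (rule integrable_subinterval_real[OF H]) (use tau t in auto)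
    have z: "\<And>s. s \<in> {0..\<tau>} - {\<tau>} \<Longrightarrow> C s = 0" unfolding C_def by auto
    have i1: "C integrable_on {0..\<tau>}"
      by (rule integrable_spike[OF integrable_0 negligible_sing]) (use z in auto)
    have "integral {0..\<tau>} C = integral {0..\<tau>} (\<lambda>_. 0)"
      by (rule integral_spike[OF negligible_sing[of \<tau>]]) (use z in auto)
    then have e1: "integral {0..\<tau>} C = 0" by simp
    have eq2: "\<And>s. s \<in> {\<tau>..t} \<Longrightarrow> C s = H s" unfolding C_def by auto
    have i2: "C integrable_on {\<tau>..t}" using integrable_eq[OF Ht, of C] eq2 by auto
    have e2: "integral {\<tau>..t} C = integral {\<tau>..t} H" by (rule integral_cong[OF eq2])
    have iC: "C integrable_on {0..t}"
      by (rule Henstock_Kurzweil_Integration.integrable_combine[OF _ True i1 i2]) (use tau in auto)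
    have c1: "integral {0..\<tau>} C + integral {\<tau>..t} C = integral {0..t} C"
      by (rule Henstock_Kurzweil_Integration.integral_combine[OF _ True iC]) (use tau in auto)
    have c2: "integral {0..\<tau>} H + integral {\<tau>..t} H = integral {0..t} H"
      by (rule Henstock_Kurzweil_Integration.integral_combine[OF _ True Ht0]) (use tau in auto)
    show ?thesis using iC c1 c2 e1 e2 True by simp
  qed
  then show "(\<lambda>s. (if \<tau> \<le> s then 1 else 0) * H s) integrable_on {0..t}"
    "integral {0..t} (\<lambda>s. (if \<tau> \<le> s then 1 else 0) * H s) =
       (if \<tau> \<le> t then integral {0..t} H - integral {0..\<tau>} H else 0)"
    unfolding C_def by auto
qed

lemma ae_zero_intervals:
  fixes g :: "real \<Rightarrow> real"
  assumes g: "integrable lborel g" and iv: "\<And>a b. a \<le> b \<Longrightarrow> (LINT x:{a..b}|lborel. g x) = 0"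
  shows "AE x in lborel. g x = 0"
proof (rule sigma_finite_measure.density_zero[OF sigma_finite_lborel g])
  have siU: "set_integrable lborel UNIV g" unfolding set_integrable_def using g by simp
  have lim: "(\<lambda>n. LINT x:{- real n..real n}|lborel. g x) \<longlonglongrightarrow> (LINT x:(\<Union>n. {- real n..real n})|lborel. g x)"
  proof (rule set_integral_cont_up)
    show "incseq (\<lambda>n. {- real n..real n})" by (rule incseq_SucI) auto
    have "(\<Union>n. {- real n..real n}) = (UNIV :: real set)"
    proof (safe, simp)
      fix x :: real
      obtain n where "\<bar>x\<bar> \<le> real n" using real_arch_simple by blast
      then show "x \<in> (\<Union>n. {- real n..real n})" by (auto intro!: exI[of _ n])
    qed
    then show "set_integrable lborel (\<Union>n. {- real n..real n}) g" using siU by simp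
  qed auto
  have "(\<Union>n. {- real n..real n}) = (UNIV :: real set)"
  proof (safe, simp)
    fix x :: real
    obtain n where "\<bar>x\<bar> \<le> real n" using real_arch_simple by blast
    then show "x \<in> (\<Union>n. {- real n..real n})" by (auto intro!: exI[of _ n])
  qed
  moreover have "(\<lambda>n. LINT x:{- real n..real n}|lborel. g x) = (\<lambda>n. 0)"
    using iv by auto
  ultimately have "(LINT x:UNIV|lborel. g x) = 0" using lim LIMSEQ_unique[OF _ tendsto_const] by metis
  then have tot: "(LINT x|lborel. g x) = 0" unfolding set_lebesgue_integral_def by simp
  fix A :: "real set" assume "A \<in> sets lborel"
  then have "A \<in> sets borel" by simp
  then show "(LINT x:A|lborel. g x) = 0"
  proof (induction rule: borel_set_induct)
    case empty
    then show ?case unfolding set_lebesgue_integral_def by simp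
  next
    case (interval a b)
    then show ?case by (rule iv)
  next
    case (compl A)
    have iA: "integrable lborel (\<lambda>x. indicator A x *\<^sub>R g x)"
      using compl(1) g by (intro integrable_mult_indicator) auto
    have "(LINT x:-A|lborel. g x) = (LINT x|lborel. g x - indicator A x *\<^sub>R g x)"
      unfolding set_lebesgue_integral_def
      by (intro Bochner_Integration.integral_cong) (auto split: split_indicator)
    also have "\<dots> = (LINT x|lborel. g x) - (LINT x|lborel. indicator A x *\<^sub>R g x)"
      using g iA by simp
    finally show ?case using tot compl(2) unfolding set_lebesgue_integral_def by simp
  next
    case (union f)
    have "(LINT x:(\<Union>i. f i)|lborel. g x) = (\<Sum>i. (LINT x:(f i)|lborel. g x))"
    proof (rule lebesgue_integral_countable_add)
      show "\<And>i. f i \<in> sets lborel" using union by simp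
      show "\<And>i j. i \<noteq> j \<Longrightarrow> f i \<inter> f j = {}" using union(1) unfolding disjoint_family_on_def by auto
      have "(\<Union>i. f i) \<in> sets lborel" using union(2) by auto
      then show "set_integrable lborel (\<Union>i. f i) g"
        unfolding set_integrable_def using g by (intro integrable_mult_indicator) auto
    qed
    then show ?case using union(3) by simp
  qed
qed

theorem proposition10:
  fixes N :: nat and T \<tau> :: real and \<xi>0 :: "nat \<Rightarrow> real"
    and \<alpha> x :: "real \<Rightarrow> nat \<Rightarrow> real" and i j :: nat
  assumes "N \<ge> 1" and "T > 0"
    and "optimal_control N T \<xi>0 \<alpha> x"
    and "mean N \<xi>0 > 0"
    and "\<forall>k\<in>{1..N}. \<forall>l\<in>{1..N}. k \<le> l \<longrightarrow> \<xi>0 k \<ge> \<xi>0 l"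
    and "\<tau> \<in> {0..T}" and "i \<in> {1..N}" and "j \<in> {1..N}"
    and "x \<tau> i = x \<tau> j"
  shows "(\<forall>t\<in>{\<tau>..T}. x t i = x t j) \<and>
         (AE t in lborel. t \<in> {\<tau>..T} \<longrightarrow> \<alpha> t i = \<alpha> t j)"
proof -
  note N = assms(1) and T = assms(2) and m0 = assms(4) and tau = assms(6)
    and ij = assms(7,8) and eqtau = assms(9)
  have adm: "admissible N T \<alpha>" and tr: "trajectory N T \<alpha> \<xi>0 x"
    and opt: "\<And>\<beta> y. admissible N T \<beta> \<Longrightarrow> trajectory N T \<beta> \<xi>0 y \<Longrightarrow> cost N T x \<le> cost N T y"
    using assms(3) unfolding optimal_control_def by auto
  have cont: "\<forall>k\<in>{1..N}. continuous_on {0..T} (\<lambda>t. x t k)" using tr unfolding trajectory_def by auto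
  have mpos: "\<And>s. s \<in> {0..T} \<Longrightarrow> mean N (x s) > 0" using mean_pos[OF N adm tr m0] by blast
  have intr: "\<And>k t. k \<in> {1..N} \<Longrightarrow> t \<in> {0..T} \<Longrightarrow> rhs N \<alpha> x k integrable_on {0..t}"
    using traj_HK(2)[OF adm tr] by blast
  have xeq: "\<And>k t. k \<in> {1..N} \<Longrightarrow> t \<in> {0..T} \<Longrightarrow> x t k = \<xi>0 k + integral {0..t} (rhs N \<alpha> x k)"
    using traj_HK(1)[OF adm tr] by blast
  have part1: "\<forall>t\<in>{\<tau>..T}. x t i = x t j"
  proof (cases "i = j")
    case True then show ?thesis by simp
  next
    case False
    note ij' = False
    define c where "c s = (if \<tau> \<le> s then 1 else 0 :: real)" for s
    have c01: "\<And>s. c s = 0 \<or> c s = 1" unfolding c_def by auto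
    define \<delta> where "\<delta> t = x (max t \<tau>) j - x (max t \<tau>) i" for t
    have \<delta>c: "\<And>s. \<delta> s = c s * (x s j - x s i)"
      unfolding \<delta>_def c_def using eqtau by (auto simp: max_def)
    define y where "y t k = (if k = i then x t i + \<delta> t / 2 else if k = j then x t j - \<delta> t / 2 else x t k)" for t k
    define \<beta> where "\<beta> s k = (if k = i then \<alpha> s i + c s * (\<alpha> s j - \<alpha> s i) / 2
       else if k = j then \<alpha> s j + c s * (\<alpha> s i - \<alpha> s j) / 2 else \<alpha> s k)" for s k
    have yi: "\<And>t. y t i = x t i + c t * (x t j - x t i) / 2" unfolding y_def \<delta>c by simp
    have yj: "\<And>t. y t j = x t j + c t * (x t i - x t j) / 2" using ij' by (simp add: y_def \<delta>c field_simps)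
    have yk: "\<And>t k. k \<noteq> i \<Longrightarrow> k \<noteq> j \<Longrightarrow> y t k = x t k" unfolding y_def by simp
    have \<beta>i: "\<And>s. \<beta> s i = \<alpha> s i + c s * (\<alpha> s j - \<alpha> s i) / 2" unfolding \<beta>_def by simp
    have \<beta>j: "\<And>s. \<beta> s j = \<alpha> s j + c s * (\<alpha> s i - \<alpha> s j) / 2" unfolding \<beta>_def using ij' by simp
    have \<beta>k: "\<And>s k. k \<noteq> i \<Longrightarrow> k \<noteq> j \<Longrightarrow> \<beta> s k = \<alpha> s k" unfolding \<beta>_def by simp
    have admb: "admissible N T \<beta>"
      unfolding admissible_def
    proof (rule conjI; rule ballI)
      fix k assume k: "k \<in> {1..N}"
      have [measurable]: "c \<in> borel_measurable (restrict_space lborel {0..T})"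
        unfolding c_def by (intro measurable_restrict_space1) measurable
      have [measurable]: "(\<lambda>t. \<alpha> t l) \<in> borel_measurable (restrict_space lborel {0..T})" if "l \<in> {1..N}" for l
        using adm that unfolding admissible_def by auto
      note mi[measurable] = this[OF ij(1)] and mj[measurable] = this[OF ij(2)] and mk = this[OF k]
      show "(\<lambda>t. \<beta> t k) \<in> borel_measurable (restrict_space lborel {0..T})"
      proof -
        consider "k = i" | "k = j" | "k \<noteq> i" "k \<noteq> j" by blast
        then show ?thesis
        proof cases
          case 1
          then have e: "(\<lambda>t. \<beta> t k) = (\<lambda>t. \<alpha> t i + c t * (\<alpha> t j - \<alpha> t i) / 2)" by (simp add: \<beta>i)
          show ?thesis unfolding e by measurable
        next
          case 2
          then have e: "(\<lambda>t. \<beta> t k) = (\<lambda>t. \<alpha> t j + c t * (\<alpha> t i - \<alpha> t j) / 2)" by (simp add: \<beta>j)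
          show ?thesis unfolding e by measurable
        next
          case 3
          then have e: "(\<lambda>t. \<beta> t k) = (\<lambda>t. \<alpha> t k)" by (simp add: \<beta>k)
          show ?thesis unfolding e by (rule mk)
        qed
      qed
    next
      fix t assume t: "t \<in> {0..T}"
      have ab: "\<And>l. l \<in> {1..N} \<Longrightarrow> 0 \<le> \<alpha> t l \<and> \<alpha> t l \<le> 1" and asum: "(\<Sum>l=1..N. \<alpha> t l) \<le> 1"
        using adm t unfolding admissible_def by auto
      show "(\<forall>k\<in>{1..N}. 0 \<le> \<beta> t k \<and> \<beta> t k \<le> 1) \<and> (\<Sum>k=1..N. \<beta> t k) \<le> 1"
      proof (rule conjI)
        show "\<forall>k\<in>{1..N}. 0 \<le> \<beta> t k \<and> \<beta> t k \<le> 1"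
        proof
          fix k assume k: "k \<in> {1..N}"
          show "0 \<le> \<beta> t k \<and> \<beta> t k \<le> 1"
            using ab[OF k] ab[OF ij(1)] ab[OF ij(2)] c01[of t] unfolding \<beta>_def by (auto simp: field_simps)
        qed
      next
        have "(\<Sum>k=1..N. \<beta> t k) = (\<Sum>k=1..N. \<alpha> t k) + 0"
          by (rule sum_two_change) (use ij ij' \<beta>k in \<open>auto simp: \<beta>i \<beta>j field_simps\<close>)
        then show "(\<Sum>k=1..N. \<beta> t k) \<le> 1" using asum by simp
      qed
    qed
    have contmax: "continuous_on {0..T} (\<lambda>t. x (max t \<tau>) k)" if "k \<in> {1..N}" for k
    proof (rule continuous_on_compose2[of "{0..T}" "\<lambda>t. x t k"])
      show "continuous_on {0..T} (\<lambda>t. x t k)" using cont that by auto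
      show "continuous_on {0..T} (\<lambda>t. max t \<tau>)" by (intro continuous_intros)
      show "(\<lambda>t. max t \<tau>) ` {0..T} \<subseteq> {0..T}" using tau by auto
    qed
    have contd: "continuous_on {0..T} \<delta>" unfolding \<delta>_def[abs_def]
      using contmax[OF ij(1)] contmax[OF ij(2)] by (intro continuous_intros)
    have conty: "\<forall>k\<in>{1..N}. continuous_on {0..T} (\<lambda>t. y t k)"
    proof
      fix k assume k: "k \<in> {1..N}"
      have ci: "continuous_on {0..T} (\<lambda>t. x t i)" "continuous_on {0..T} (\<lambda>t. x t j)"
        "continuous_on {0..T} (\<lambda>t. x t k)" using cont ij k by auto
      show "continuous_on {0..T} (\<lambda>t. y t k)"
        unfolding y_def using ci contd by (cases "k = i"; cases "k = j") (auto intro!: continuous_intros)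
    qed
    have meany: "\<And>s. mean N (y s) = mean N (x s)"
    proof -
      fix s
      have "(\<Sum>k=1..N. y s k) = (\<Sum>k=1..N. x s k) + 0"
        by (rule sum_two_change) (use ij ij' yk in \<open>auto simp: yi yj field_simps\<close>)
      then show "mean N (y s) = mean N (x s)" unfolding mean_def by simp
    qed
    have rhsi: "\<And>s. rhs N \<beta> y i s = rhs N \<alpha> x i s + c s * (rhs N \<alpha> x j s - rhs N \<alpha> x i s) / 2"
      unfolding rhs_def meany yi \<beta>i by (simp add: field_simps)
    have rhsj: "\<And>s. rhs N \<beta> y j s = rhs N \<alpha> x j s + c s * (rhs N \<alpha> x i s - rhs N \<alpha> x j s) / 2"
      unfolding rhs_def meany yj \<beta>j by (simp add: field_simps)
    have rhsk: "\<And>s k. k \<noteq> i \<Longrightarrow> k \<noteq> j \<Longrightarrow> rhs N \<beta> y k s = rhs N \<alpha> x k s"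
      unfolding rhs_def meany using yk \<beta>k by simp
    have gen: "x t p + c t * (x t q - x t p) / 2 =
         \<xi>0 p + integral {0..t} (\<lambda>s. rhs N \<alpha> x p s + c s * (rhs N \<alpha> x q s - rhs N \<alpha> x p s) / 2)"
      if p: "p \<in> {1..N}" and q: "q \<in> {1..N}" and pq: "x \<tau> p = x \<tau> q" and t: "t \<in> {0..T}" for p q t
    proof -
      define Hq where "Hq s = rhs N \<alpha> x q s - rhs N \<alpha> x p s" for s
      have HT: "Hq integrable_on {0..T}" unfolding Hq_def[abs_def]
        using intr[OF q, of T] intr[OF p, of T] T by (intro integrable_diff) auto
      have hint: "\<And>u. u \<in> {0..T} \<Longrightarrow> integral {0..u} Hq = (x u q - \<xi>0 q) - (x u p - \<xi>0 p)"
      proof -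
        fix u assume u: "u \<in> {0..T}"
        have "integral {0..u} Hq = integral {0..u} (rhs N \<alpha> x q) - integral {0..u} (rhs N \<alpha> x p)"
          unfolding Hq_def[abs_def] using intr[OF q u] intr[OF p u]
          by (intro Henstock_Kurzweil_Integration.integral_diff) auto
        then show "integral {0..u} Hq = (x u q - \<xi>0 q) - (x u p - \<xi>0 p)"
          using xeq[OF q u] xeq[OF p u] by auto
      qed
      have st: "(\<lambda>s. c s * Hq s) integrable_on {0..t}"
        "integral {0..t} (\<lambda>s. c s * Hq s) = (if \<tau> \<le> t then integral {0..t} Hq - integral {0..\<tau>} Hq else 0)"
        using int_step[OF HT tau t] unfolding c_def by auto
      have "integral {0..t} (\<lambda>s. rhs N \<alpha> x p s + c s * (rhs N \<alpha> x q s - rhs N \<alpha> x p s) / 2)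
          = integral {0..t} (\<lambda>s. rhs N \<alpha> x p s + (1/2) * (c s * Hq s))"
        unfolding Hq_def by simp
      also have "\<dots> = integral {0..t} (rhs N \<alpha> x p) + (1/2) * integral {0..t} (\<lambda>s. c s * Hq s)"
        using intr[OF p t] st(1) by (simp add: Henstock_Kurzweil_Integration.integral_add integrable_on_cmult_left)
      finally have eq: "integral {0..t} (\<lambda>s. rhs N \<alpha> x p s + c s * (rhs N \<alpha> x q s - rhs N \<alpha> x p s) / 2)
          = (x t p - \<xi>0 p) + (1/2) * (if \<tau> \<le> t then integral {0..t} Hq - integral {0..\<tau>} Hq else 0)"
        using xeq[OF p t] st(2) by simp
      show ?thesis
      proof (cases "\<tau> \<le> t")
        case True
        have ct: "c t = 1" using True unfolding c_def by simp
        have e2: "integral {0..t} (\<lambda>s. rhs N \<alpha> x p s + c s * (rhs N \<alpha> x q s - rhs N \<alpha> x p s) / 2)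
          = (x t p - \<xi>0 p) + (1/2) * (integral {0..t} Hq - integral {0..\<tau>} Hq)" using eq True by simp
        have e3: "x t p + c t * (x t q - x t p) / 2 = x t p + (x t q - x t p) / 2" by (simp add: ct)
        have h1: "integral {0..t} Hq = x t q - \<xi>0 q - (x t p - \<xi>0 p)" by (rule hint[OF t])
        have h2: "integral {0..\<tau>} Hq = \<xi>0 p - \<xi>0 q" using hint[OF tau] pq by simp
        show ?thesis unfolding e2 e3 h1 h2 by (simp add: field_simps)
      next
        case False
        have ct: "c t = 0" using False unfolding c_def by simp
        show ?thesis using eq False by (simp add: ct)
      qed
    qed
    have trY: "trajectory N T \<beta> \<xi>0 y"
    proof (rule traj_intro[OF admb conty], intro ballI)
      fix k t assume k: "k \<in> {1..N}" and t: "t \<in> {0..T}"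
      consider "k = i" | "k = j" | "k \<noteq> i" "k \<noteq> j" by blast
      then show "y t k = \<xi>0 k + integral {0..t} (rhs N \<beta> y k)"
      proof cases
        case 1
        have e: "rhs N \<beta> y i = (\<lambda>s. rhs N \<alpha> x i s + c s * (rhs N \<alpha> x j s - rhs N \<alpha> x i s) / 2)"
          by (rule ext) (rule rhsi)
        show ?thesis using gen[OF ij(1) ij(2) eqtau t] 1 by (simp add: yi e)
      next
        case 2
        have e: "rhs N \<beta> y j = (\<lambda>s. rhs N \<alpha> x j s + c s * (rhs N \<alpha> x i s - rhs N \<alpha> x j s) / 2)"
          by (rule ext) (rule rhsj)
        show ?thesis using gen[OF ij(2) ij(1) eqtau[symmetric] t] 2 by (simp add: yj e)
      next
        case 3
        have e: "rhs N \<beta> y k = rhs N \<alpha> x k" by (rule ext) (rule rhsk[OF 3])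
        show ?thesis using xeq[OF k t] yk[OF 3] by (simp add: e)
      qed
    qed
    have cle: "cost N T x \<le> cost N T y" by (rule opt[OF admb trY])
    have Vcont: "continuous_on {0..T} (\<lambda>t. Vfun N (z t))" if "\<forall>k\<in>{1..N}. continuous_on {0..T} (\<lambda>t. z t k)" for z
      unfolding Vfun_def using that by (intro continuous_intros) auto
    have costI: "cost N T z = integral {0..T} (\<lambda>t. Vfun N (z t))" if "\<forall>k\<in>{1..N}. continuous_on {0..T} (\<lambda>t. z t k)" for z
      unfolding cost_def by (rule set_borel_integral_eq_integral(2)[OF borel_integrable_atLeastAtMost'[OF Vcont[OF that]]])
    define D where "D t = (\<delta> t)\<^sup>2 / (2 * real N)" for t
    have Vy: "Vfun N (y t) = Vfun N (x t) - D t" for t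
    proof -
      have "(\<Sum>k=1..N. (y t k)\<^sup>2) = (\<Sum>k=1..N. (x t k)\<^sup>2) + (- (\<delta> t)\<^sup>2 / 2)"
      proof (rule sum_two_change)
        show "(y t i)\<^sup>2 + (y t j)\<^sup>2 = (x t i)\<^sup>2 + (x t j)\<^sup>2 + - (\<delta> t)\<^sup>2 / 2"
          using c01[of t] unfolding yi yj \<delta>c by (auto simp: power2_eq_square field_simps)
      qed (use ij ij' yk in auto)
      then show ?thesis unfolding Vfun_def D_def using N by (simp add: field_simps)
    qed
    have contD: "continuous_on {0..T} D" unfolding D_def[abs_def] using contd N by (intro continuous_intros) auto
    have iVx: "(\<lambda>t. Vfun N (x t)) integrable_on {0..T}" by (rule integrable_continuous_interval[OF Vcont[OF cont]])
    have iD: "D integrable_on {0..T}" by (rule integrable_continuous_interval[OF contD])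
    have "cost N T y = integral {0..T} (\<lambda>t. Vfun N (x t) - D t)" unfolding costI[OF conty] Vy ..
    also have "\<dots> = cost N T x - integral {0..T} D"
      unfolding costI[OF cont] by (rule Henstock_Kurzweil_Integration.integral_diff[OF iVx iD])
    finally have "integral {0..T} D \<le> 0" using cle by simp
    moreover have "integral {0..T} D \<ge> 0" by (rule integral_nonneg[OF iD]) (auto simp: D_def)
    ultimately have D0: "integral {0..T} D = 0" by simp
    have Dz: "D t = 0" if "t \<in> {0..T}" for t
    proof (rule has_integral_0_cbox_imp_0[of 0 T D])
      show "continuous_on (cbox 0 T) D" using contD by simp
      show "\<And>x. x \<in> box 0 T \<Longrightarrow> 0 \<le> D x" by (auto simp: D_def)
      show "(D has_integral 0) (cbox 0 T)" using integrable_integral[OF iD] D0 by simp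
      show "box 0 T \<noteq> {}" using T by simp
      show "t \<in> cbox 0 T" using that by simp
    qed
    show ?thesis
    proof
      fix t assume t: "t \<in> {\<tau>..T}"
      then have "D t = 0" using Dz tau by auto
      then have "\<delta> t = 0" unfolding D_def using N by simp
      moreover have "max t \<tau> = t" using t by auto
      ultimately show "x t i = x t j" unfolding \<delta>_def by simp
    qed
  qed
  have part2: "AE t in lborel. t \<in> {\<tau>..T} \<longrightarrow> \<alpha> t i = \<alpha> t j"
  proof -
    define H where "H s = rhs N \<alpha> x j s - rhs N \<alpha> x i s" for s
    have siH: "set_integrable lborel {0..T} H"
      unfolding H_def[abs_def] using rhs_si[OF adm cont ij(2)] rhs_si[OF adm cont ij(1)]
      by (rule set_integral_diff(1))
    have siH2: "set_integrable lborel {\<tau>..T} H" using si_sub(1)[OF siH, of \<tau> T] tau by auto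
    define g where "g s = indicator {\<tau>..T} s *\<^sub>R H s" for s
    have gi: "integrable lborel g" using siH2 unfolding set_integrable_def g_def[abs_def] .
    have Hint: "\<And>c d. \<tau> \<le> c \<Longrightarrow> c \<le> d \<Longrightarrow> d \<le> T \<Longrightarrow> integral {c..d} H = 0"
    proof -
      fix c d assume cd: "\<tau> \<le> c" "c \<le> d" "d \<le> T"
      have iH: "H integrable_on {0..d}" unfolding H_def[abs_def]
        using intr[OF ij(2), of d] intr[OF ij(1), of d] cd tau by (intro integrable_diff) auto
      have comb: "integral {0..c} H + integral {c..d} H = integral {0..d} H"
        by (rule Henstock_Kurzweil_Integration.integral_combine[OF _ cd(2) iH]) (use cd tau in auto)
      have ev: "\<And>u. u \<in> {\<tau>..T} \<Longrightarrow> integral {0..u} H = \<xi>0 i - \<xi>0 j"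
      proof -
        fix u assume u: "u \<in> {\<tau>..T}"
        have "integral {0..u} H = integral {0..u} (rhs N \<alpha> x j) - integral {0..u} (rhs N \<alpha> x i)"
          unfolding H_def[abs_def] using intr[OF ij(2), of u] intr[OF ij(1), of u] u tau
          by (intro Henstock_Kurzweil_Integration.integral_diff) auto
        also have "\<dots> = (x u j - \<xi>0 j) - (x u i - \<xi>0 i)" using xeq[OF ij(2), of u] xeq[OF ij(1), of u] u tau by auto
        finally show "integral {0..u} H = \<xi>0 i - \<xi>0 j" using part1 u by auto
      qed
      show "integral {c..d} H = 0" using comb ev[of c] ev[of d] cd by auto
    qed
    have iv: "(LINT s:{a..b}|lborel. g s) = 0" if "a \<le> b" for a b
    proof -
      have "(LINT s:{a..b}|lborel. g s) = (LINT s:{max a \<tau>..min b T}|lborel. H s)"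
        unfolding set_lebesgue_integral_def g_def
        by (intro Bochner_Integration.integral_cong) (auto split: split_indicator)
      also have "\<dots> = 0"
      proof (cases "max a \<tau> \<le> min b T")
        case True
        have "(LINT s:{max a \<tau>..min b T}|lborel. H s) = integral {max a \<tau>..min b T} H"
          by (rule si_sub(3)[OF siH]) (use tau in auto)
        also have "\<dots> = 0" by (rule Hint) (use True in auto)
        finally show ?thesis .
      next
        case False
        then have "{max a \<tau>..min b T} = {}" by auto
        then show ?thesis unfolding set_lebesgue_integral_def by simp
      qed
      finally show ?thesis .
    qed
    have ae: "AE s in lborel. g s = 0" by (rule ae_zero_intervals[OF gi iv])
    show ?thesis
    proof (rule AE_mp[OF ae], rule AE_I2, intro impI)
      fix s assume gs: "g s = 0" and s: "s \<in> {\<tau>..T}"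
      have s0: "s \<in> {0..T}" using s tau by auto
      have "H s = 0" using gs s unfolding g_def by simp
      moreover have "H s = (\<alpha> s i - \<alpha> s j) * mean N (x s)"
        using part1 s unfolding H_def rhs_def by (auto simp: algebra_simps)
      ultimately show "\<alpha> s i = \<alpha> s j" using mpos[OF s0] by simp
    qed
  qed
  show ?thesis using part1 part2 by blast
qed

end
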